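(* Let $k$ be an algebraically closed field of characteristic zero, $A=k[x,y]$, $\mathfrak m=(x,y)$. Let $M$ be an $A$-module of length $4$ supported at $\mathfrak m$ with $\dim_k M/\mathfrak m M=3$. Then either $M\cong k\oplus (A/\mathfrak m^2)^\ast$, or $M\cong k^2\oplus\mathscr O_Z$, where $k=A/\mathfrak m$ and $\mathscr O_Z=A/I$ is the structure sheaf of a length-$2$ subscheme $Z\subset\mathbb A^2$ supported at the origin.
   Context: $(A/\mathfrak m^2)^\ast=\operatorname{Hom}_k(A/\mathfrak m^2,k)$ with $A$-action $(a\cdot\varphi)(m)=\varphi(am)$. *)

theory Defs
  imports "HOL-Analysis.Analysis" "HOL-Computational_Algebra.Polynomial"
begin

text \<open>A finite-dimensional module over A = k[x,y] is modelled as a pair of commuting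
  k-linear operators (the actions of x and y) on a coordinate space 'k^'n, given by matrices.\<close>

definition algebraically_closed_field :: "'k::field itself \<Rightarrow> bool" where
  "algebraically_closed_field _ \<longleftrightarrow> (\<forall>p::'k poly. degree p > 0 \<longrightarrow> (\<exists>z. poly p z = 0))"

definition kxy_module :: "'k::field^'n^'n \<Rightarrow> 'k^'n^'n \<Rightarrow> bool" where
  "kxy_module X Y \<longleftrightarrow> X ** Y = Y ** X"

text \<open>Action of the monomial x^i y^j.\<close>
definition mono_act :: "'k::field^'n^'n \<Rightarrow> 'k^'n^'n \<Rightarrow> nat \<Rightarrow> nat \<Rightarrow> 'k^'n \<Rightarrow> 'k^'n" where
  "mono_act X Y i j v = ((\<lambda>u. X *v u) ^^ i) (((\<lambda>u. Y *v u) ^^ j) v)"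

text \<open>Supported at m = (x,y) (finite length): m^N M = 0 for some N.\<close>
definition supported_at_origin :: "'k::field^'n^'n \<Rightarrow> 'k^'n^'n \<Rightarrow> bool" where
  "supported_at_origin X Y \<longleftrightarrow> (\<exists>N. \<forall>i j v. i + j = N \<longrightarrow> mono_act X Y i j v = 0)"

text \<open>The submodule mM = xM + yM.\<close>
definition mM :: "'k::field^'n^'n \<Rightarrow> 'k^'n^'n \<Rightarrow> ('k^'n) set" where
  "mM X Y = vec.span (range (\<lambda>v. X *v v) \<union> range (\<lambda>v. Y *v v))"

text \<open>dim_k (M / mM).\<close>
definition top_dim :: "'k::field^'n^'n \<Rightarrow> 'k^'n^'n \<Rightarrow> nat" where
  "top_dim X Y = vec.dim (UNIV :: ('k^'n) set) - vec.dim (mM X Y)"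

text \<open>Isomorphism of k[x,y]-modules.\<close>
definition kxy_iso :: "'k::field^'n^'n \<Rightarrow> 'k^'n^'n \<Rightarrow> 'k^'m^'m \<Rightarrow> 'k^'m^'m \<Rightarrow> bool" where
  "kxy_iso X Y X' Y' \<longleftrightarrow> (\<exists>f :: 'k^'n \<Rightarrow> 'k^'m.
      Vector_Spaces.linear (*s) (*s) f \<and> bij f \<and>
      (\<forall>v. f (X *v v) = X' *v f v) \<and> (\<forall>v. f (Y *v v) = Y' *v f v))"

text \<open>Cyclic module (= A/I for an ideal I, namely I = Ann(v)).\<close>
definition cyclic_module :: "'k::field^'n^'n \<Rightarrow> 'k^'n^'n \<Rightarrow> bool" where
  "cyclic_module X Y \<longleftrightarrow> (\<exists>v. vec.span {mono_act X Y i j v | i j. True} = UNIV)"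

text \<open>Direct sum of modules (block-diagonal operators).\<close>
definition dsum :: "'k::field^'a^'a \<Rightarrow> 'k^'b^'b \<Rightarrow> 'k^('a + 'b)^('a + 'b)" where
  "dsum A B = (\<chi> i j. case (i, j) of (Inl a, Inl b) \<Rightarrow> A $ a $ b
                                   | (Inr a, Inr b) \<Rightarrow> B $ a $ b
                                   | _ \<Rightarrow> 0)"

text \<open>A/m^2 with k-basis (1, x, y) = (e1, e2, e3): x maps 1 to x, y maps 1 to y, all else to 0.\<close>
definition Am2_x :: "'k::field^3^3" where
  "Am2_x = (\<chi> i j. if i = 2 \<and> j = 1 then 1 else 0)"
definition Am2_y :: "'k::field^3^3" where
  "Am2_y = (\<chi> i j. if i = 3 \<and> j = 1 then 1 else 0)"

text \<open>Dual module Hom_k(N,k) with (a.phi)(m) = phi(a m): in dual coordinates the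
  operator of a is the transpose.\<close>
definition dual_op :: "'k::field^'n^'n \<Rightarrow> 'k^'n^'n" where
  "dual_op A = transpose A"

end

theory Submission
  imports Defs
begin


lemma iso_intro:
  fixes g :: "'k::field^'m \<Rightarrow> 'k^'n" and X Y :: "'k^'n^'n" and X' Y' :: "'k^'m^'m"
  assumes card: "CARD('m) = CARD('n)" and lin: "Vector_Spaces.linear (*s) (*s) g"
    and inj: "\<And>v. g v = 0 \<Longrightarrow> v = 0"
    and hx: "\<And>v. g (X' *v v) = X *v g v" and hy: "\<And>v. g (Y' *v v) = Y *v g v"
  shows "kxy_iso X Y X' Y'"
proof -
  have ig: "inj g" using inj vec.linear_inj_iff_eq_0[OF lin] by blast
  obtain f where f: "Vector_Spaces.linear (*s) (*s) f" "\<forall>x. f (g x) = x" "\<forall>x. g (f x) = x"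
    using vec.linear_injective_isomorphism[OF lin ig] card by (metis vec_dim_card)
  have "bij f" by (metis f(2,3) bij_betw_byWitness subset_UNIV)
  moreover have "\<forall>v. f (X *v v) = X' *v f v"
    by (metis f(2,3) hx)
  moreover have "\<forall>v. f (Y *v v) = Y' *v f v"
    by (metis f(2,3) hy)
  ultimately show ?thesis unfolding kxy_iso_def using f(1) by blast
qed

lemma sum_Plus_UNIV: "sum f (UNIV :: ('a::finite + 'b::finite) set) = sum (\<lambda>a. f (Inl a)) UNIV + sum (\<lambda>b. f (Inr b)) UNIV"
  by (simp add: UNIV_Plus_UNIV[symmetric] sum.Plus comp_def del: UNIV_Plus_UNIV)

lemma X1_mult: "(dsum (0 :: 'k::field^1^1) (dual_op Am2_x)) *v v = (\<chi> i. if i = Inr 1 then v $ Inr 2 else 0)"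
  unfolding vec_eq_iff
proof
  fix i :: "1 + 3"
  show "(dsum (0 :: 'k::field^1^1) (dual_op Am2_x) *v v) $ i = (\<chi> i. if i = Inr 1 then v $ Inr 2 else 0) $ i"
    by (cases i; simp add: matrix_vector_mult_def sum_Plus_UNIV dsum_def dual_op_def Am2_x_def transpose_def sum_3;
        metis exhaust_3)
qed

lemma Y1_mult: "(dsum (0 :: 'k::field^1^1) (dual_op Am2_y)) *v v = (\<chi> i. if i = Inr 1 then v $ Inr 3 else 0)"
  unfolding vec_eq_iff
proof
  fix i :: "1 + 3"
  show "(dsum (0 :: 'k::field^1^1) (dual_op Am2_y) *v v) $ i = (\<chi> i. if i = Inr 1 then v $ Inr 3 else 0) $ i"
    by (cases i; simp add: matrix_vector_mult_def sum_Plus_UNIV dsum_def dual_op_def Am2_y_def transpose_def sum_3;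
        metis exhaust_3)
qed

definition nil2 :: "'k::field \<Rightarrow> 'k^2^2" where "nil2 s = (\<chi> i j. if i = 2 \<and> j = 1 then s else 0)"

lemma Z_mult: "(dsum (0 :: 'k::field^2^2) (nil2 s)) *v v
   = (\<chi> i. if i = Inr 2 then s * v $ Inr 1 else 0)"
  unfolding vec_eq_iff
proof
  fix i :: "2 + 2"
  show "(dsum (0 :: 'k::field^2^2) (nil2 s) *v v) $ i = (\<chi> i. if i = Inr 2 then s * v $ Inr 1 else 0) $ i"
    by (cases i; simp add: matrix_vector_mult_def sum_Plus_UNIV dsum_def sum_2 nil2_def;
        metis exhaust_2)
qed



lemma case1:
  fixes X Y :: "'k::field^4^4"
  assumes "X *v za = 0" "Y *v za = 0" "X *v w = 0" "Y *v w = 0" "X *v zb = w" "Y *v zb = 0"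
    "X *v zc = 0" "Y *v zc = w" "w \<noteq> 0" and ind: "\<And>c. c *s za \<in> vec.span {w} \<Longrightarrow> c = 0"
  shows "kxy_iso X Y (dsum (0 :: 'k^1^1) (dual_op Am2_x)) (dsum (0 :: 'k^1^1) (dual_op Am2_y))"
proof -
  define col :: "1+3 \<Rightarrow> 'k^4" where "col = (\<lambda>c. case c of Inl _ \<Rightarrow> za | Inr b \<Rightarrow> if b = 1 then w else if b = 2 then zb else zc)"
  define P :: "'k^(1+3)^4" where "P = (\<chi> r c. col c $ r)"
  have gexp: "P *v v = v $ Inl 1 *s za + v $ Inr 1 *s w + v $ Inr 2 *s zb + v $ Inr 3 *s zc" for v
    unfolding vec_eq_iff
    by (simp add: P_def col_def matrix_vector_mult_def sum_Plus_UNIV sum_3 algebra_simps)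
  have Xg: "X *v (P *v v) = v $ Inr 2 *s w" for v
    using assms(1-8) by (simp add: gexp vec.add vec.scale)
  have Yg: "Y *v (P *v v) = v $ Inr 3 *s w" for v
    using assms(1-8) by (simp add: gexp vec.add vec.scale)
  show ?thesis
  proof (rule iso_intro[where g = "\<lambda>v. P *v v"])
    show "Vector_Spaces.linear (*s) (*s) ((*v) P)" by (rule matrix_vector_mul_linear_gen)
    show "CARD(1 + 3) = CARD(4)" by simp
    show "P *v (dsum 0 (dual_op Am2_x) *v v) = X *v (P *v v)" for v
      unfolding Xg by (simp add: X1_mult gexp)
    show "P *v (dsum 0 (dual_op Am2_y) *v v) = Y *v (P *v v)" for v
      unfolding Yg by (simp add: Y1_mult gexp)
    fix v :: "'k^(1+3)"
    assume 0: "P *v v = 0"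
    have 2: "v $ Inr 2 = 0" using Xg[of v] 0 \<open>w \<noteq> 0\<close> by simp
    have 3: "v $ Inr 3 = 0" using Yg[of v] 0 \<open>w \<noteq> 0\<close> by simp
    have "v $ Inl 1 *s za + v $ Inr 1 *s w = 0" using 0 2 3 unfolding gexp by simp
    then have "v $ Inl 1 *s za = (- v $ Inr 1) *s w"
      by (simp add: vector_smult_lneg eq_neg_iff_add_eq_0)
    then have "v $ Inl 1 *s za \<in> vec.span {w}" unfolding vec.span_singleton by (metis rangeI)
    then have 1: "v $ Inl 1 = 0" using ind by blast
    have 4: "v $ Inr 1 = 0" using 0 1 2 3 \<open>w \<noteq> 0\<close> unfolding gexp by simp
    show "v = 0" unfolding vec_eq_iff
    proof
      fix i :: "1+3"
      show "v $ i = 0 $ i"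
      proof (cases i)
        case (Inl a) then show ?thesis using 1 num1_eq1[of a] by simp
      next
        case (Inr b) then show ?thesis using 2 3 4 exhaust_3[of b] by auto
      qed
    qed
  qed
qed



lemma nil2_mult: "nil2 s *v v = (\<chi> i. if i = 2 then s * v $ 1 else 0)"
  unfolding vec_eq_iff nil2_def by (auto simp: matrix_vector_mult_def sum_2 forall_2)

lemma nil2_props:
  fixes s t :: "'k::field"
  assumes "s \<noteq> 0 \<or> t \<noteq> 0"
  shows "kxy_module (nil2 s) (nil2 t) \<and> supported_at_origin (nil2 s) (nil2 t) \<and> cyclic_module (nil2 s) (nil2 t)"
proof (intro conjI)
  show "kxy_module (nil2 s) (nil2 t)"
    unfolding kxy_module_def nil2_def by (simp add: vec_eq_iff matrix_matrix_mult_def sum_2 forall_2)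
  have sq: "nil2 a *v (nil2 b *v v) = 0" for a b :: 'k and v
    by (simp add: nil2_mult vec_eq_iff forall_2)
  show "supported_at_origin (nil2 s) (nil2 t)"
    unfolding supported_at_origin_def
  proof (intro exI[of _ 2] allI impI)
    fix i j :: nat and v :: "'k^2" assume "i + j = 2"
    then have "(i = 2 \<and> j = 0) \<or> (i = 1 \<and> j = 1) \<or> (i = 0 \<and> j = 2)" by auto
    then show "mono_act (nil2 s) (nil2 t) i j v = 0"
      by (auto simp: mono_act_def numeral_2_eq_2 sq)
  qed
  define e1 :: "'k^2" where "e1 = (\<chi> i. if i = 1 then 1 else 0)"
  define e2 :: "'k^2" where "e2 = (\<chi> i. if i = 2 then 1 else 0)"
  let ?S = "vec.span {mono_act (nil2 s) (nil2 t) i j e1 | i j. True}"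
  have "e1 \<in> ?S"
    by (rule vec.span_base) (rule CollectI, rule exI[of _ 0], rule exI[of _ 0], simp add: mono_act_def)
  have "s *s e2 \<in> ?S"
    by (rule vec.span_base) (rule CollectI, rule exI[of _ 1], rule exI[of _ 0],
        simp add: mono_act_def nil2_mult e1_def e2_def vec_eq_iff forall_2)
  have "t *s e2 \<in> ?S"
    by (rule vec.span_base) (rule CollectI, rule exI[of _ 0], rule exI[of _ 1],
        simp add: mono_act_def nil2_mult e1_def e2_def vec_eq_iff forall_2)
  have "e2 \<in> ?S"
  proof (cases "s = 0")
    case True
    then have "t \<noteq> 0" using assms by auto
    have "inverse t *s (t *s e2) \<in> ?S" by (rule vec.span_scale) fact
    then show ?thesis using \<open>t \<noteq> 0\<close> by (simp add: vector_smult_assoc)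
  next
    case False
    have "inverse s *s (s *s e2) \<in> ?S" by (rule vec.span_scale) fact
    then show ?thesis using False by (simp add: vector_smult_assoc)
  qed
  have "x \<in> ?S" for x
  proof -
    have x: "x = x $ 1 *s e1 + x $ 2 *s e2" by (simp add: vec_eq_iff forall_2 e1_def e2_def)
    have "x $ 1 *s e1 + x $ 2 *s e2 \<in> ?S"
      by (intro vec.span_add vec.span_scale \<open>e1 \<in> ?S\<close> \<open>e2 \<in> ?S\<close>)
    then show ?thesis using x by metis
  qed
  then show "cyclic_module (nil2 s) (nil2 t)" unfolding cyclic_module_def by blast
qed

lemma case2:
  fixes X Y :: "'k::field^4^4"
  assumes "X *v pa = 0" "Y *v pa = 0" "X *v pb = 0" "Y *v pb = 0" "X *v w = 0" "Y *v w = 0"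
    "X *v u = s *s w" "Y *v u = t *s w" "w \<noteq> 0" "s \<noteq> 0 \<or> t \<noteq> 0"
    and ind: "\<And>c1 c2. c1 *s pa + c2 *s pb \<in> vec.span {w} \<Longrightarrow> c1 = 0 \<and> c2 = 0"
  shows "kxy_iso X Y (dsum (0 :: 'k^2^2) (nil2 s)) (dsum (0 :: 'k^2^2) (nil2 t))"
proof -
  define col :: "2+2 \<Rightarrow> 'k^4" where "col = (\<lambda>c. case c of Inl a \<Rightarrow> if a = 1 then pa else pb | Inr b \<Rightarrow> if b = 1 then u else w)"
  define P :: "'k^(2+2)^4" where "P = (\<chi> r c. col c $ r)"
  have gexp: "P *v v = v $ Inl 1 *s pa + v $ Inl 2 *s pb + v $ Inr 1 *s u + v $ Inr 2 *s w" for v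
    unfolding vec_eq_iff
    by (simp add: P_def col_def matrix_vector_mult_def sum_Plus_UNIV sum_2 algebra_simps)
  have Xg: "X *v (P *v v) = (s * v $ Inr 1) *s w" for v
    using assms(1-8) by (simp add: gexp vec.add vec.scale)
  have Yg: "Y *v (P *v v) = (t * v $ Inr 1) *s w" for v
    using assms(1-8) by (simp add: gexp vec.add vec.scale)
  show ?thesis
  proof (rule iso_intro[where g = "\<lambda>v. P *v v"])
    show "Vector_Spaces.linear (*s) (*s) ((*v) P)" by (rule matrix_vector_mul_linear_gen)
    show "CARD(2 + 2) = CARD(4)" by simp
    show "P *v (dsum 0 (nil2 s) *v v) = X *v (P *v v)" for v
      unfolding Xg by (simp add: Z_mult gexp)
    show "P *v (dsum 0 (nil2 t) *v v) = Y *v (P *v v)" for v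
      unfolding Yg by (simp add: Z_mult gexp)
    fix v :: "'k^(2+2)"
    assume 0: "P *v v = 0"
    have 3: "v $ Inr 1 = 0" using Xg[of v] Yg[of v] 0 \<open>w \<noteq> 0\<close> assms(10) by auto
    have "v $ Inl 1 *s pa + v $ Inl 2 *s pb + v $ Inr 2 *s w = 0" using 0 3 unfolding gexp by simp
    then have "v $ Inl 1 *s pa + v $ Inl 2 *s pb = (- v $ Inr 2) *s w"
      by (simp add: vector_smult_lneg eq_neg_iff_add_eq_0)
    then have "v $ Inl 1 *s pa + v $ Inl 2 *s pb \<in> vec.span {w}" unfolding vec.span_singleton by (metis rangeI)
    then have 1: "v $ Inl 1 = 0" "v $ Inl 2 = 0" using ind by blast+
    have 4: "v $ Inr 2 = 0" using 0 1 3 \<open>w \<noteq> 0\<close> unfolding gexp by simp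
    show "v = 0" unfolding vec_eq_iff
    proof
      fix i :: "2+2"
      show "v $ i = 0 $ i"
      proof (cases i)
        case (Inl a) then show ?thesis using 1 exhaust_2[of a] by auto
      next
        case (Inr b) then show ?thesis using 3 4 exhaust_2[of b] by auto
      qed
    qed
  qed
qed



definition dotk :: "'k::field^'n \<Rightarrow> 'k^'n \<Rightarrow> 'k" where
  "dotk a v = (\<Sum>j\<in>UNIV. a $ j * v $ j)"

lemma dotk_add[simp]: "dotk a (x + y) = dotk a x + dotk a y"
  by (simp add: dotk_def algebra_simps sum.distrib)
lemma dotk_diff[simp]: "dotk a (x - y) = dotk a x - dotk a y"
  by (simp add: dotk_def algebra_simps sum_subtractf)
lemma dotk_scale[simp]: "dotk a (c *s x) = c * dotk a x"
  by (simp add: dotk_def algebra_simps sum_distrib_left)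
lemma dotk_lscale[simp]: "dotk (c *s a) x = c * dotk a x"
  by (simp add: dotk_def algebra_simps sum_distrib_left)
lemma dotk_zero[simp]: "dotk a 0 = 0" "dotk 0 x = 0"
  by (simp_all add: dotk_def)
lemma dotk_axis[simp]: "dotk a (axis i 1) = a $ i"
proof -
  have e: "(\<lambda>j. a $ j * axis i 1 $ j) = (\<lambda>j. if j = i then a $ j else 0)" by (auto simp: axis_def)
  show ?thesis unfolding dotk_def e by simp
qed

lemma sep:
  fixes a b :: "'k::field^'n"
  assumes "b \<noteq> 0" "\<And>c. a \<noteq> c *s b"
  shows "\<exists>v. dotk b v = 0 \<and> dotk a v = 1"
proof -
  obtain j where j: "b $ j \<noteq> 0" using assms(1) by (metis vec_eq_iff zero_index)
  define vi where "vi = (\<lambda>i. b $ j *s axis i 1 - b $ i *s axis j (1::'k))"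
  have bvi: "dotk b (vi i) = 0" for i by (simp add: vi_def)
  have "\<exists>i. dotk a (vi i) \<noteq> 0"
  proof (rule ccontr)
    assume "\<not> ?thesis"
    then have "b $ j * a $ i - b $ i * a $ j = 0" for i by (simp add: vi_def)
    then have h: "a $ i = (a $ j / b $ j) * b $ i" for i using j
      by (simp add: field_simps)
    have "a = (a $ j / b $ j) *s b" unfolding vec_eq_iff by (simp only: vector_smult_component h[symmetric] simp_thms)
    then show False using assms(2) by blast
  qed
  then obtain i where i: "dotk a (vi i) \<noteq> 0" by blast
  show ?thesis
    by (rule exI[of _ "inverse (dotk a (vi i)) *s vi i"]) (simp add: bvi i)
qed

lemma out3:
  fixes S :: "('k::field^4) set"
  assumes "finite S" "card S \<le> 3"
  shows "\<exists>v. v \<notin> vec.span S"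
proof (rule ccontr)
  assume "\<not> ?thesis"
  then have "UNIV \<subseteq> vec.span S" by auto
  then have "vec.dim (UNIV :: ('k^4) set) \<le> card S" using vec.dim_le_card assms(1) by blast
  then show False using assms(2) by (simp add: card_cart_basis)
qed

lemma nilp:
  fixes X Y :: "'k::field^'n^'n"
  assumes "supported_at_origin X Y" "X *v w = c *s w" "w \<noteq> 0"
  shows "c = 0"
proof -
  obtain N where N: "\<And>i j v. i + j = N \<Longrightarrow> mono_act X Y i j v = 0"
    using assms(1) unfolding supported_at_origin_def by blast
  have "((\<lambda>u. X *v u) ^^ n) w = c ^ n *s w" for n
    by (induction n) (simp_all add: vec.scale assms(2))
  then have "c ^ N *s w = 0" using N[of N 0 w] by (simp add: mono_act_def)
  then show ?thesis using assms(3) by simp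
qed

lemma nilp2:
  fixes X Y :: "'k::field^'n^'n"
  assumes "supported_at_origin X Y" "Y *v w = c *s w" "w \<noteq> 0"
  shows "c = 0"
proof -
  obtain N where N: "\<And>i j v. i + j = N \<Longrightarrow> mono_act X Y i j v = 0"
    using assms(1) unfolding supported_at_origin_def by blast
  have "((\<lambda>u. Y *v u) ^^ n) w = c ^ n *s w" for n
    by (induction n) (simp_all add: vec.scale assms(2))
  then have "c ^ N *s w = 0" using N[of 0 N w] by (simp add: mono_act_def)
  then show ?thesis using assms(3) by simp
qed



theorem proposition5p1:
  fixes X Y :: "'k::field_char_0 ^ 4 ^ 4"
  assumes "algebraically_closed_field TYPE('k)"
    and "kxy_module X Y"
    and "supported_at_origin X Y"
    and "top_dim X Y = 3"
  shows "kxy_iso X Y (dsum (0 :: 'k^1^1) (dual_op Am2_x)) (dsum (0 :: 'k^1^1) (dual_op Am2_y))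
       \<or> (\<exists>XZ YZ :: 'k^2^2. kxy_module XZ YZ \<and> supported_at_origin XZ YZ \<and> cyclic_module XZ YZ \<and>
            kxy_iso X Y (dsum (0 :: 'k^2^2) XZ) (dsum (0 :: 'k^2^2) YZ))"
proof -
  have d4: "vec.dim (UNIV :: ('k^4) set) = 4" by (simp add: card_cart_basis)
  have "vec.dim (mM X Y) \<le> 4" using vec.dim_subset[of "mM X Y" UNIV] d4 by simp
  then have d1: "vec.dim (mM X Y) = 1" using assms(4) d4 unfolding top_dim_def by linarith
  obtain B where B: "B \<subseteq> mM X Y" "vec.independent B" "mM X Y \<subseteq> vec.span B" "card B = 1"
    using vec.basis_exists[of "mM X Y"] d1 by metis
  obtain w where Bw: "B = {w}" using B(4) card_1_singletonE by blast
  have w0: "w \<noteq> 0" using B(2) Bw by simp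
  have wM: "w \<in> mM X Y" using B(1) Bw by simp
  have XM: "X *v v \<in> mM X Y" for v unfolding mM_def by (rule vec.span_base) auto
  have YM: "Y *v v \<in> mM X Y" for v unfolding mM_def by (rule vec.span_base) auto
  have Xc: "\<exists>c. X *v v = c *s w" for v
    using XM[of v] B(3) Bw by (auto simp: vec.span_singleton)
  have Yc: "\<exists>c. Y *v v = c *s w" for v
    using YM[of v] B(3) Bw by (auto simp: vec.span_singleton)
  have Xw: "X *v w = 0" using Xc[of w] nilp[OF assms(3) _ w0] by fastforce
  have Yw: "Y *v w = 0" using Yc[of w] nilp2[OF assms(3) _ w0] by fastforce
  obtain i0 where i0: "w $ i0 \<noteq> 0" using w0 by (metis vec_eq_iff zero_index)
  define a :: "'k^4" where "a = (\<chi> j. X $ i0 $ j / w $ i0)"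
  define b :: "'k^4" where "b = (\<chi> j. Y $ i0 $ j / w $ i0)"
  have Xa: "X *v v = dotk a v *s w" for v
  proof -
    obtain c where c: "X *v v = c *s w" using Xc by blast
    have "(X *v v) $ i0 = c * w $ i0" using c by simp
    then have "c = (X *v v) $ i0 / w $ i0" using i0 by (simp add: field_simps)
    also have "\<dots> = dotk a v" by (simp add: dotk_def a_def matrix_vector_mult_def sum_divide_distrib algebra_simps)
    finally show ?thesis using c by simp
  qed
  have Yb: "Y *v v = dotk b v *s w" for v
  proof -
    obtain c where c: "Y *v v = c *s w" using Yc by blast
    have "(Y *v v) $ i0 = c * w $ i0" using c by simp
    then have "c = (Y *v v) $ i0 / w $ i0" using i0 by (simp add: field_simps)
    also have "\<dots> = dotk b v" by (simp add: dotk_def b_def matrix_vector_mult_def sum_divide_distrib algebra_simps)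
    finally show ?thesis using c by simp
  qed
  have ab0: "a \<noteq> 0 \<or> b \<noteq> 0"
  proof (rule ccontr)
    assume "\<not> ?thesis"
    then have "X *v v = 0" "Y *v v = 0" for v using Xa Yb by auto
    then have "range ((*v) X) \<union> range ((*v) Y) = {0}" by auto
    then have "mM X Y = vec.span {0}" unfolding mM_def by simp
    then show False using wM w0 by simp
  qed
  show ?thesis
  proof (cases "b \<noteq> 0 \<and> (\<forall>c. a \<noteq> c *s b)")
    case True
    then have b0: "b \<noteq> 0" and nab: "\<And>c. a \<noteq> c *s b" by auto
    have a0: "a \<noteq> 0" using nab[of 0] by simp
    have nba: "b \<noteq> c *s a" for c
    proof
      assume h: "b = c *s a"
      then have "c \<noteq> 0" using b0 by auto
      then have "a = inverse c *s b" using h by simp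
      then show False using nab by blast
    qed
    obtain u2 where u2: "dotk b u2 = 0" "dotk a u2 = 1" using sep[of b a] b0 nab by blast
    obtain u3 where u3: "dotk a u3 = 0" "dotk b u3 = 1" using sep[of a b] a0 nba by blast
    have "card {w, u2, u3} \<le> 3" by (simp add: card_insert_if)
    then obtain v where v: "v \<notin> vec.span {w, u2, u3}" using out3[of "{w, u2, u3}"] by auto
    define u0 where "u0 = v - dotk a v *s u2 - dotk b v *s u3"
    have "kxy_iso X Y (dsum (0 :: 'k^1^1) (dual_op Am2_x)) (dsum (0 :: 'k^1^1) (dual_op Am2_y))"
    proof (rule case1[where za = u0 and w = w and zb = u2 and zc = u3])
      show "X *v u0 = 0" "Y *v u0 = 0" unfolding Xa Yb u0_def using u2 u3 by simp_all
      show "X *v w = 0" "Y *v w = 0" by (fact Xw, fact Yw)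
      show "X *v u2 = w" "Y *v u2 = 0" "X *v u3 = 0" "Y *v u3 = w" unfolding Xa Yb using u2 u3 by simp_all
      show "w \<noteq> 0" by (fact w0)
      fix c assume c: "c *s u0 \<in> vec.span {w}"
      show "c = 0"
      proof (rule ccontr)
        assume "c \<noteq> 0"
        have "inverse c *s (c *s u0) \<in> vec.span {w}" using c by (rule vec.span_scale)
        then have "u0 \<in> vec.span {w}" using \<open>c \<noteq> 0\<close> by (simp add: vector_smult_assoc)
        then have "u0 \<in> vec.span {w, u2, u3}" using vec.span_mono[of "{w}" "{w, u2, u3}"] by auto
        moreover have "v = u0 + dotk a v *s u2 + dotk b v *s u3" unfolding u0_def by simp
        moreover have "u0 + dotk a v *s u2 + dotk b v *s u3 \<in> vec.span {w, u2, u3}" if "u0 \<in> vec.span {w, u2, u3}"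
          using that by (intro vec.span_add vec.span_scale) (auto intro: vec.span_base)
        ultimately have "v \<in> vec.span {w, u2, u3}" by simp
        then show False using v by blast
      qed
    qed
    then show ?thesis by blast
  next
    case False
    obtain g s t where g: "a = s *s g" "b = t *s g" "g \<noteq> 0" "s \<noteq> 0 \<or> t \<noteq> 0"
    proof (cases "b = 0")
      case True
      then show ?thesis using that[of 1 a 0] ab0 by simp
    next
      case bn: False
      then obtain c where "a = c *s b" using False by blast
      then show ?thesis using that[of c b 1] bn by simp
    qed
    obtain j where j: "g $ j \<noteq> 0" using g(3) by (metis vec_eq_iff zero_index)
    define u where "u = inverse (g $ j) *s axis j (1::'k)"
    have gu: "dotk g u = 1" using j by (simp add: u_def)
    have "card {u, w} \<le> 3" by (simp add: card_insert_if)
    then obtain v1 where v1: "v1 \<notin> vec.span {u, w}" using out3[of "{u, w}"] by auto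
    have "card {u, w, v1} \<le> 3" by (simp add: card_insert_if)
    then obtain v2 where v2: "v2 \<notin> vec.span {u, w, v1}" using out3[of "{u, w, v1}"] by auto
    define p1 where "p1 = v1 - dotk g v1 *s u"
    define p2 where "p2 = v2 - dotk g v2 *s u"
    have "kxy_iso X Y (dsum (0 :: 'k^2^2) (nil2 s)) (dsum (0 :: 'k^2^2) (nil2 t))"
    proof (rule case2[where pa = p1 and pb = p2 and w = w and u = u])
      show "X *v p1 = 0" "Y *v p1 = 0" "X *v p2 = 0" "Y *v p2 = 0"
        unfolding Xa Yb p1_def p2_def g(1,2) using gu by simp_all
      show "X *v w = 0" "Y *v w = 0" by (fact Xw, fact Yw)
      show "X *v u = s *s w" "Y *v u = t *s w" unfolding Xa Yb g(1,2) using gu by simp_all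
      show "w \<noteq> 0" by (fact w0)
      show "s \<noteq> 0 \<or> t \<noteq> 0" by (fact g(4))
      fix c1 c2 assume c: "c1 *s p1 + c2 *s p2 \<in> vec.span {w}"
      have c2: "c2 = 0"
      proof (rule ccontr)
        assume "c2 \<noteq> 0"
        have S: "vec.span {w} \<subseteq> vec.span {u, w, v1}" by (rule vec.span_mono) auto
        have "c2 *s v2 = (c1 *s p1 + c2 *s p2) - c1 *s v1 + (c1 * dotk g v1) *s u + (c2 * dotk g v2) *s u"
          unfolding p1_def p2_def by (simp add: algebra_simps)
        also have "\<dots> \<in> vec.span {u, w, v1}"
        proof -
          have A: "c1 *s p1 + c2 *s p2 \<in> vec.span {u, w, v1}" using c S by blast
          have B: "v1 \<in> vec.span {u, w, v1}" "u \<in> vec.span {u, w, v1}" by (auto intro: vec.span_base)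
          show ?thesis
            by (rule vec.span_add[OF vec.span_add[OF vec.span_diff[OF A vec.span_scale[OF B(1)]] vec.span_scale[OF B(2)]] vec.span_scale[OF B(2)]])
        qed
        finally have "inverse c2 *s (c2 *s v2) \<in> vec.span {u, w, v1}" by (rule vec.span_scale)
        then show False using v2 \<open>c2 \<noteq> 0\<close> by simp
      qed
      have c1: "c1 = 0"
      proof (rule ccontr)
        assume "c1 \<noteq> 0"
        have S: "vec.span {w} \<subseteq> vec.span {u, w}" by (rule vec.span_mono) auto
        have "c1 *s v1 = (c1 *s p1 + c2 *s p2) + (c1 * dotk g v1) *s u"
          unfolding p1_def c2 by (simp add: algebra_simps)
        also have "\<dots> \<in> vec.span {u, w}"
        proof -
          have A: "c1 *s p1 + c2 *s p2 \<in> vec.span {u, w}" using c S by blast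
          have B: "u \<in> vec.span {u, w}" by (auto intro: vec.span_base)
          show ?thesis by (rule vec.span_add[OF A vec.span_scale[OF B]])
        qed
        finally have "inverse c1 *s (c1 *s v1) \<in> vec.span {u, w}" by (rule vec.span_scale)
        then show False using v1 \<open>c1 \<noteq> 0\<close> by simp
      qed
      show "c1 = 0 \<and> c2 = 0" using c1 c2 by simp
    qed
    then show ?thesis using nil2_props[OF g(4)] by blast
  qed
qed

end
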